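(* Let $\theta:\mathbb R\to\mathbb R$ be nondecreasing with $\theta(x+\pi)=\theta(x)+\pi$ for all $x$. For $0\le\tau\le\pi/2$ define \[ J(\tau)=\frac1{2\pi}\int_0^{2\pi}\sin^2\frac{\theta(x+\tau)-\theta(x-\tau)}{2}\,\mathrm dx . \] If $M$ is nonnegative and nonincreasing on $[0,\pi/2]$, then \[ \int_0^{\pi/2}M(\tau)J(\tau)\,\mathrm d\tau\le\frac2\pi\int_0^{\pi/2}M(\tau)\,\tau\,\mathrm d\tau . \] *)

theory Defs
  imports "HOL-Analysis.Analysis"
begin

definition J :: "(real \<Rightarrow> real) \<Rightarrow> real \<Rightarrow> real" where
  "J \<theta> \<tau> = (1 / (2 * pi)) *
     integral {0..2 * pi} (\<lambda>x. (sin ((\<theta> (x + \<tau>) - \<theta> (x - \<tau>)) / 2))\<^sup>2)"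

end

theory Submission
  imports Defs
begin


definition psi :: "real \<Rightarrow> real" where "psi u = (1 - cos u) / 2"

lemma sin_sq_psi: "(sin (u/2))^2 = psi u"
  using cos_double_sin[of "u/2"] by (simp add: psi_def)

lemma psi_compl: "psi u + psi (pi - u) = 1"
  by (simp add: psi_def field_simps)

lemma psi_0[simp]: "psi 0 = 0" by (simp add: psi_def)
lemma psi_pi[simp]: "psi pi = 1" by (simp add: psi_def)

lemma psi_mono: "0 \<le> x \<Longrightarrow> x \<le> y \<Longrightarrow> y \<le> pi \<Longrightarrow> psi x \<le> psi y"
  using cos_monotone_0_pi_le[of x y] by (simp add: psi_def)

lemma psi_nonneg: "0 \<le> psi x" by (simp add: psi_def)
lemma psi_le1: "psi x \<le> 1" by (simp add: psi_def)

lemma conv_pair: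
  assumes "a \<le> l" "l \<le> t" "t \<le> r" "r \<le> b" "b - a \<le> pi"
  shows "psi (t - a) + psi (b - t) \<le> max (psi (l - a) + psi (b - l)) (psi (r - a) + psi (b - r))"
proof -
  have "convex_on {l..r} (\<lambda>t. psi (t - a) + psi (b - t))"
  proof (rule f''_ge0_imp_convex[where f' = "\<lambda>t. (sin (t - a) - sin (b - t))/2"
          and f'' = "\<lambda>t. (cos (t - a) + cos (b - t))/2"])
    show "convex {l..r}" by simp
    fix x assume x: "x \<in> {l..r}"
    show "DERIV (\<lambda>t. psi (t - a) + psi (b - t)) x :> (sin (x - a) - sin (b - x))/2"
      unfolding psi_def by (auto intro!: derivative_eq_intros simp: field_simps)
    show "DERIV (\<lambda>t. (sin (t - a) - sin (b - t))/2) x :> (cos (x - a) + cos (b - x))/2"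
      by (auto intro!: derivative_eq_intros simp: field_simps)
    have "cos (pi - (x - a)) \<le> cos (b - x)"
      using x assms by (intro cos_monotone_0_pi_le) auto
    then show "0 \<le> (cos (x - a) + cos (b - x))/2" by simp
  qed
  then show ?thesis using convex_on_le_max[of l r _ t] assms by auto
qed

lemma conc_diff:
  assumes "0 \<le> l" "l \<le> t" "t \<le> r" "r + c \<le> pi" "0 \<le> c"
  shows "psi (t + c) - psi t \<ge> min (psi (l + c) - psi l) (psi (r + c) - psi r)"
proof -
  have "concave_on {l..r} (\<lambda>t. psi (t + c) - psi t)"
  proof (rule f''_le0_imp_concave[where f' = "\<lambda>t. (sin (t + c) - sin t)/2"
          and f'' = "\<lambda>t. (cos (t + c) - cos t)/2"])
    show "convex {l..r}" by simp
    fix x assume x: "x \<in> {l..r}"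
    show "DERIV (\<lambda>t. psi (t + c) - psi t) x :> (sin (x + c) - sin x)/2"
      unfolding psi_def by (auto intro!: derivative_eq_intros simp: field_simps)
    show "DERIV (\<lambda>t. (sin (t + c) - sin t)/2) x :> (cos (x + c) - cos x)/2"
      by (auto intro!: derivative_eq_intros simp: field_simps)
    have "cos (x + c) \<le> cos x"
      using x assms by (intro cos_monotone_0_pi_le) auto
    then show "(cos (x + c) - cos x)/2 \<le> 0" by simp
  qed
  then show ?thesis using concave_on_ge_min[of l r _ t] assms by auto
qed

lemma psi_superadd:
  assumes "0 \<le> x" "0 \<le> y" "x + y \<le> pi"
  shows "psi x + psi y \<le> psi (x + y)"
proof -
  have "psi (x + y) - psi x \<ge> min (psi (0 + y) - psi 0) (psi ((pi - y) + y) - psi (pi - y))"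
    using conc_diff[of 0 x "pi - y" y] assms by auto
  moreover have "psi (pi - y) = 1 - psi y" using psi_compl[of y] by simp
  ultimately show ?thesis by simp
qed


lemma conc2:
  assumes "l \<le> y" "y \<le> r" "Q \<le> P" "A \<le> B"
    and "\<And>y. y \<in> {l..r} \<Longrightarrow> 0 \<le> Q - y \<and> P - y \<le> pi \<and> 0 \<le> y - B \<and> y - A \<le> pi"
  shows "psi (P - y) - psi (Q - y) + psi (y - A) - psi (y - B) \<ge>
     min (psi (P - l) - psi (Q - l) + psi (l - A) - psi (l - B)) (psi (P - r) - psi (Q - r) + psi (r - A) - psi (r - B))"
proof -
  have "concave_on {l..r} (\<lambda>y. psi (P - y) - psi (Q - y) + psi (y - A) - psi (y - B))"
  proof (rule f''_le0_imp_concave[where f' = "\<lambda>y. (- sin (P - y) + sin (Q - y) + sin (y - A) - sin (y - B))/2"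
          and f'' = "\<lambda>y. (cos (P - y) - cos (Q - y) + cos (y - A) - cos (y - B))/2"])
    show "convex {l..r}" by simp
    fix x assume x: "x \<in> {l..r}"
    show "DERIV (\<lambda>y. psi (P - y) - psi (Q - y) + psi (y - A) - psi (y - B)) x :> (- sin (P - x) + sin (Q - x) + sin (x - A) - sin (x - B))/2"
      unfolding psi_def by (auto intro!: derivative_eq_intros simp: field_simps)
    show "DERIV (\<lambda>y. (- sin (P - y) + sin (Q - y) + sin (y - A) - sin (y - B))/2) x :> (cos (P - x) - cos (Q - x) + cos (x - A) - cos (x - B))/2"
      by (auto intro!: derivative_eq_intros simp: field_simps)
    have h: "0 \<le> Q - x \<and> P - x \<le> pi \<and> 0 \<le> x - B \<and> x - A \<le> pi" using assms(5) x by blast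
    have "cos (P - x) \<le> cos (Q - x)"
      using h assms by (intro cos_monotone_0_pi_le) auto
    moreover have "cos (x - A) \<le> cos (x - B)"
      using h assms by (intro cos_monotone_0_pi_le) auto
    ultimately show "(cos (P - x) - cos (Q - x) + cos (x - A) - cos (x - B))/2 \<le> 0" by simp
  qed
  then show ?thesis using concave_on_ge_min[of l r _ y] assms by auto
qed

definition CL :: "nat \<Rightarrow> (nat \<Rightarrow> real) \<Rightarrow> (nat \<Rightarrow> real) \<Rightarrow> real" where
  "CL k a b = (\<Sum>s<Suc k. psi (b s - a s))"
definition CR :: "nat \<Rightarrow> (nat \<Rightarrow> real) \<Rightarrow> (nat \<Rightarrow> real) \<Rightarrow> real" where
  "CR k a b = (\<Sum>s<k. psi (b (Suc s) - a s))"
definition chyp :: "nat \<Rightarrow> (nat \<Rightarrow> real) \<Rightarrow> (nat \<Rightarrow> real) \<Rightarrow> bool" where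
  "chyp k a b \<longleftrightarrow> (\<forall>s<k. a s \<le> a (Suc s)) \<and> (\<forall>s<k. b s \<le> b (Suc s)) \<and> a k = b 0 \<and> b k - a 0 \<le> pi"

lemma chain_mono:
  assumes "\<forall>s<k. a s \<le> a (Suc s)" "i \<le> j" "j \<le> k"
  shows "a i \<le> (a j :: real)"
  using assms(2,3)
proof (induction j)
  case 0 then show ?case by simp
next
  case (Suc j)
  show ?case
  proof (cases "i = Suc j")
    case True then show ?thesis by simp
  next
    case False
    then have "a i \<le> a j" using Suc by simp
    also have "a j \<le> a (Suc j)" using assms(1) Suc by simp
    finally show ?thesis .
  qed
qed

lemma core_case1:
  assumes IH: "\<And>a b. chyp k' a b \<Longrightarrow> CL k' a b \<le> CR k' a b"
    and H: "chyp (Suc k') a b" and eq: "a 0 = a 1"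
  shows "CL (Suc k') a b \<le> CR (Suc k') a b"
proof -
  define a' where "a' = (\<lambda>s. a (Suc s))"
  define b' where "b' = (\<lambda>s. if s = 0 then b 0 else b (Suc s))"
  have am: "\<forall>s<Suc k'. a s \<le> a (Suc s)" and bm: "\<forall>s<Suc k'. b s \<le> b (Suc s)"
    and ab: "a (Suc k') = b 0" and sp: "b (Suc k') - a 0 \<le> pi" using H by (auto simp: chyp_def)
  have "chyp k' a' b'"
    unfolding chyp_def
  proof (intro conjI allI impI)
    fix s assume "s < k'" then show "a' s \<le> a' (Suc s)" using am by (simp add: a'_def)
  next
    fix s assume s: "s < k'"
    show "b' s \<le> b' (Suc s)"
    proof (cases "s = 0")
      case True
      have "b 0 \<le> b 2" using chain_mono[OF bm, of 0 2] s True by simp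
      then show ?thesis using True by (simp add: b'_def numeral_2_eq_2)
    next
      case False then show ?thesis using bm s by (simp add: b'_def)
    qed
  next
    show "a' k' = b' 0" using ab by (simp add: a'_def b'_def)
  next
    show "b' k' - a' 0 \<le> pi"
    proof (cases "k' = 0")
      case True then show ?thesis using ab by (simp add: a'_def b'_def)
    next
      case False then show ?thesis using sp eq by (simp add: a'_def b'_def)
    qed
  qed
  then have "CL k' a' b' \<le> CR k' a' b'" by (rule IH)
  moreover have "CL (Suc k') a b = psi (b 1 - a 1) + CL k' a' b'"
  proof -
    have "CL (Suc k') a b = psi (b 0 - a 0) + (\<Sum>s<Suc k'. psi (b (Suc s) - a (Suc s)))"
      unfolding CL_def by (rule sum.lessThan_Suc_shift)
    also have "(\<Sum>s<Suc k'. psi (b (Suc s) - a (Suc s))) = psi (b 1 - a 1) + (\<Sum>s<k'. psi (b (Suc (Suc s)) - a (Suc (Suc s))))"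
      by (subst sum.lessThan_Suc_shift) simp
    also have "CL k' a' b' = psi (b 0 - a 1) + (\<Sum>s<k'. psi (b (Suc (Suc s)) - a (Suc (Suc s))))"
      unfolding CL_def by (subst sum.lessThan_Suc_shift) (simp add: a'_def b'_def)
    ultimately show ?thesis using eq by simp
  qed
  moreover have "CR (Suc k') a b = psi (b 1 - a 1) + CR k' a' b'"
    unfolding CR_def by (subst sum.lessThan_Suc_shift) (simp add: a'_def b'_def eq)
  ultimately show ?thesis by simp
qed

lemma core_case2:
  assumes IH: "\<And>a b. chyp k' a b \<Longrightarrow> CL k' a b \<le> CR k' a b"
    and H: "chyp (Suc k') a b" and eq: "b (Suc k') = b k'"
  shows "CL (Suc k') a b \<le> CR (Suc k') a b"
proof -
  define a' where "a' = a(k' := a (Suc k'))"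
  have am: "\<forall>s<Suc k'. a s \<le> a (Suc s)" and bm: "\<forall>s<Suc k'. b s \<le> b (Suc s)"
    and ab: "a (Suc k') = b 0" and sp: "b (Suc k') - a 0 \<le> pi" using H by (auto simp: chyp_def)
  have "chyp k' a' b"
    unfolding chyp_def
  proof (intro conjI allI impI)
    fix s assume s: "s < k'"
    show "a' s \<le> a' (Suc s)"
    proof (cases "Suc s = k'")
      case True
      have "a s \<le> a (Suc k')" using chain_mono[OF am, of s "Suc k'"] s by simp
      then show ?thesis using True s by (simp add: a'_def)
    next
      case False then show ?thesis using am s by (simp add: a'_def)
    qed
  next
    fix s assume "s < k'" then show "b s \<le> b (Suc s)" using bm by simp
  next
    show "a' k' = b 0" using ab by (simp add: a'_def)
  next
    show "b k' - a' 0 \<le> pi"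
    proof (cases "k' = 0")
      case True then show ?thesis using ab by (simp add: a'_def)
    next
      case False then show ?thesis using sp eq by (simp add: a'_def)
    qed
  qed
  then have "CL k' a' b \<le> CR k' a' b" by (rule IH)
  moreover
  have s1: "(\<Sum>s<k'. psi (b s - a' s)) = (\<Sum>s<k'. psi (b s - a s))"
    by (rule sum.cong) (auto simp: a'_def)
  have s2: "(\<Sum>s<k'. psi (b (Suc s) - a' s)) = (\<Sum>s<k'. psi (b (Suc s) - a s))"
    by (rule sum.cong) (auto simp: a'_def)
  have "CL (Suc k') a b = CL k' a' b + psi (b k' - a k')"
    unfolding CL_def using s1 eq by (simp add: a'_def)
  moreover have "CR (Suc k') a b = CR k' a' b + psi (b k' - a k')"
    unfolding CR_def using s2 eq by simp
  ultimately show ?thesis by simp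
qed


definition Mid :: "nat \<Rightarrow> (nat \<Rightarrow> real) \<Rightarrow> (nat \<Rightarrow> real) \<Rightarrow> real" where
  "Mid j a b = (\<Sum>s<j. psi (b (Suc (Suc s)) - a (Suc s))) - (\<Sum>s<Suc j. psi (b (Suc s) - a (Suc s)))"

lemma CR_CL_split:
  "CR (Suc (Suc j)) a b - CL (Suc (Suc j)) a b =
    psi (b 1 - a 0) - psi (b 0 - a 0) + psi (b (Suc (Suc j)) - a (Suc j)) - psi (b (Suc (Suc j)) - a (Suc (Suc j))) + Mid j a b"
proof -
  have L: "CL (Suc (Suc j)) a b = psi (b 0 - a 0) + ((\<Sum>s<Suc j. psi (b (Suc s) - a (Suc s))) + psi (b (Suc (Suc j)) - a (Suc (Suc j))))"
    unfolding CL_def by (subst sum.lessThan_Suc_shift) (subst sum.lessThan_Suc, simp)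
  have R: "CR (Suc (Suc j)) a b = psi (b 1 - a 0) + ((\<Sum>s<j. psi (b (Suc (Suc s)) - a (Suc s))) + psi (b (Suc (Suc j)) - a (Suc j)))"
    unfolding CR_def by (subst sum.lessThan_Suc_shift) (subst sum.lessThan_Suc, simp)
  show ?thesis unfolding L R Mid_def by simp
qed

lemma Mid_upd: "Mid j (a(0 := v)) (b(Suc (Suc j) := w)) = Mid j a b"
proof -
  have "(\<Sum>s<j. psi ((b(Suc (Suc j) := w)) (Suc (Suc s)) - (a(0 := v)) (Suc s))) = (\<Sum>s<j. psi (b (Suc (Suc s)) - a (Suc s)))"
    by (rule sum.cong) auto
  moreover have "(\<Sum>s<Suc j. psi ((b(Suc (Suc j) := w)) (Suc s) - (a(0 := v)) (Suc s))) = (\<Sum>s<Suc j. psi (b (Suc s) - a (Suc s)))"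
    by (rule sum.cong) auto
  ultimately show ?thesis unfolding Mid_def by simp
qed

lemma core_step:
  assumes IH: "\<And>a b. chyp (Suc j) a b \<Longrightarrow> CL (Suc j) a b \<le> CR (Suc j) a b"
    and H: "chyp (Suc (Suc j)) a b"
  shows "CL (Suc (Suc j)) a b \<le> CR (Suc (Suc j)) a b"
proof -
  define k where "k = Suc (Suc j)"
  have am: "\<forall>s<k. a s \<le> a (Suc s)" and bm: "\<forall>s<k. b s \<le> b (Suc s)"
    and ab: "a k = b 0" and sp: "b k - a 0 \<le> pi" using H by (auto simp: chyp_def k_def)
  define E where "E v w = psi (b 1 - v) - psi (b 0 - v) + psi (w - a (Suc j)) - psi (w - a k) + Mid j a b" for v w
  have EE: "CR k (a(0 := v)) (b(k := w)) - CL k (a(0 := v)) (b(k := w)) = E v w" for v w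
    unfolding k_def E_def using CR_CL_split[of j "a(0 := v)" "b(Suc (Suc j) := w)"] Mid_upd[of j a v b w]
    by simp
  have a01: "a 0 \<le> a 1" using am k_def by auto
  have a1j: "a 1 \<le> a (Suc j)" using chain_mono[OF am, of 1 "Suc j"] k_def by simp
  have ajk: "a (Suc j) \<le> a k" using am k_def by auto
  have b01: "b 0 \<le> b 1" using bm k_def by auto
  have b1j: "b 1 \<le> b (Suc j)" using chain_mono[OF bm, of 1 "Suc j"] k_def by simp
  have bjk: "b (Suc j) \<le> b k" using bm k_def by auto
  have a1k: "a 1 \<le> a k" using a1j ajk by simp
  have F1: "0 \<le> E (a 1) w" if w: "b (Suc j) \<le> w" "w \<le> a 1 + pi" for w
  proof -
    have "chyp (Suc (Suc j)) (a(0 := a 1)) (b(k := w))"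
      unfolding chyp_def
    proof (intro conjI allI impI)
      fix s assume s: "s < Suc (Suc j)"
      show "(a(0 := a 1)) s \<le> (a(0 := a 1)) (Suc s)" using am s k_def by auto
      show "(b(k := w)) s \<le> (b(k := w)) (Suc s)"
      proof (cases "Suc s = k")
        case True then show ?thesis using w k_def by auto
      next
        case False then show ?thesis using bm s k_def by auto
      qed
    next
      show "(a(0 := a 1)) (Suc (Suc j)) = (b(k := w)) 0" using ab k_def by auto
      show "(b(k := w)) (Suc (Suc j)) - (a(0 := a 1)) 0 \<le> pi" using w k_def by auto
    qed
    then have "CL k (a(0 := a 1)) (b(k := w)) \<le> CR k (a(0 := a 1)) (b(k := w))"
      using core_case1[where k'="Suc j", OF IH] k_def by simp
    then show ?thesis using EE[of "a 1" w] by simp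
  qed
  have F2: "0 \<le> E v (b (Suc j))" if v: "b (Suc j) - pi \<le> v" "v \<le> a 1" for v
  proof -
    have "chyp (Suc (Suc j)) (a(0 := v)) (b(k := b (Suc j)))"
      unfolding chyp_def
    proof (intro conjI allI impI)
      fix s assume s: "s < Suc (Suc j)"
      show "(a(0 := v)) s \<le> (a(0 := v)) (Suc s)" using am s v k_def by auto
      show "(b(k := b (Suc j))) s \<le> (b(k := b (Suc j))) (Suc s)"
      proof (cases "Suc s = k")
        case True then show ?thesis using k_def by auto
      next
        case False then show ?thesis using bm s k_def by auto
      qed
    next
      show "(a(0 := v)) (Suc (Suc j)) = (b(k := b (Suc j))) 0" using ab k_def by auto
      show "(b(k := b (Suc j))) (Suc (Suc j)) - (a(0 := v)) 0 \<le> pi" using v k_def by auto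
    qed
    then have "CL k (a(0 := v)) (b(k := b (Suc j))) \<le> CR k (a(0 := v)) (b(k := b (Suc j)))"
      using core_case2[where k'="Suc j", OF IH] k_def by simp
    then show ?thesis using EE[of v "b (Suc j)"] by simp
  qed
  have st1: "E (a 0) (b k) \<ge> min (E (a 1) (b k)) (E (b k - pi) (b k))"
  proof -
    have "psi ((b 0 - a 0) + (b 1 - b 0)) - psi (b 0 - a 0) \<ge>
          min (psi ((b 0 - a 1) + (b 1 - b 0)) - psi (b 0 - a 1)) (psi ((b 0 - (b k - pi)) + (b 1 - b 0)) - psi (b 0 - (b k - pi)))"
      using ab a1k a01 sp b1j bjk b01 by (intro conc_diff) auto
    then show ?thesis unfolding E_def by (simp add: min_def algebra_simps split: if_splits)
  qed
  have st2: "E (b k - pi) (b k) \<ge> min (E (b (Suc j) - pi) (b (Suc j))) (E (a 1 + pi - pi) (a 1 + pi))"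
  proof -
    have "psi ((b 1 + pi) - b k) - psi ((b 0 + pi) - b k) + psi (b k - a (Suc j)) - psi (b k - a k) \<ge>
      min (psi ((b 1 + pi) - b (Suc j)) - psi ((b 0 + pi) - b (Suc j)) + psi (b (Suc j) - a (Suc j)) - psi (b (Suc j) - a k))
          (psi ((b 1 + pi) - (a 1 + pi)) - psi ((b 0 + pi) - (a 1 + pi)) + psi ((a 1 + pi) - a (Suc j)) - psi ((a 1 + pi) - a k))"
    proof (rule conc2)
      show "b (Suc j) \<le> b k" by (rule bjk)
      show "b k \<le> a 1 + pi" using sp a01 by simp
      show "b 0 + pi \<le> b 1 + pi" using b01 by simp
      show "a (Suc j) \<le> a k" by (rule ajk)
      fix y assume y: "y \<in> {b (Suc j)..a 1 + pi}"
      show "0 \<le> b 0 + pi - y \<and> b 1 + pi - y \<le> pi \<and> 0 \<le> y - a k \<and> y - a (Suc j) \<le> pi"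
        using y ab a1k b1j bm a1j k_def by auto
    qed
    then show ?thesis unfolding E_def by (simp add: min_def algebra_simps split: if_splits)
  qed
  have "0 \<le> E (b (Suc j) - pi) (b (Suc j))"
    using F2[of "b (Suc j) - pi"] bjk sp a01 by simp
  moreover have "0 \<le> E (a 1 + pi - pi) (a 1 + pi)"
    using F1[of "a 1 + pi"] bjk sp a01 by simp
  moreover have "0 \<le> E (a 1) (b k)" using F1[of "b k"] bjk sp a01 by simp
  ultimately have "0 \<le> E (a 0) (b k)" using st1 st2 by linarith
  moreover have "E (a 0) (b k) = CR k a b - CL k a b"
    using EE[of "a 0" "b k"] by simp
  ultimately show ?thesis unfolding k_def by simp
qed

lemma core:
  "chyp k a b \<Longrightarrow> CL k a b \<le> CR k a b"
proof (induction k arbitrary: a b rule: less_induct)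
  case (less k)
  show ?case
  proof (cases k)
    case 0
    then show ?thesis using less.prems by (simp add: CL_def CR_def chyp_def)
  next
    case (Suc k')
    show ?thesis
    proof (cases k')
      case 0
      have h: "a 0 \<le> a 1" "b 0 \<le> b 1" "a 1 = b 0" "b 1 - a 0 \<le> pi"
        using less.prems Suc 0 by (auto simp: chyp_def)
      have "psi (b 0 - a 0) + psi (b 1 - b 0) \<le> psi ((b 0 - a 0) + (b 1 - b 0))"
        using h by (intro psi_superadd) auto
      then show ?thesis using Suc 0 h by (simp add: CL_def CR_def)
    next
      case (Suc j)
      show ?thesis using core_step[of j a b] less \<open>k = Suc k'\<close> Suc by simp
    qed
  qed
qed




lemma locA:
  assumes m1: "1 \<le> m" and pm: "\<forall>i<2*m. p i \<le> p (Suc i)" and sp: "p (2*m) - p 0 \<le> pi"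
    and eq: "p m = p (Suc m)"
  shows "(\<Sum>r<Suc m. psi (p (r+m) - p r)) \<le> (\<Sum>r<m. psi (p (Suc (r+m)) - p r))"
proof -
  obtain k where mk: "m = Suc k" using m1 by (cases m) auto
  define a where "a s = p (Suc s)" for s
  define b where "b s = p (Suc (m + s))" for s
  have "chyp k a b"
    unfolding chyp_def
  proof (intro conjI allI impI)
    fix s assume "s < k"
    then show "a s \<le> a (Suc s)" using pm mk by (auto simp: a_def)
  next
    fix s assume "s < k"
    then show "b s \<le> b (Suc s)" using pm mk by (auto simp: b_def)
  next
    show "a k = b 0" using eq mk by (simp add: a_def b_def)
  next
    have "p 0 \<le> p 1" using pm mk by auto
    moreover have "b k = p (2*m)" using mk by (simp add: b_def mult_2)
    ultimately show "b k - a 0 \<le> pi" using sp by (simp add: a_def)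
  qed
  then have c: "CL k a b \<le> CR k a b" by (rule core)
  have L: "(\<Sum>r<Suc m. psi (p (r+m) - p r)) = psi (p m - p 0) + CL k a b"
    unfolding CL_def a_def b_def mk by (subst sum.lessThan_Suc_shift) (simp add: algebra_simps)
  have R: "(\<Sum>r<m. psi (p (Suc (r+m)) - p r)) = psi (p (Suc m) - p 0) + CR k a b"
    unfolding CR_def a_def b_def mk by (subst sum.lessThan_Suc_shift) (simp add: algebra_simps)
  show ?thesis unfolding L R using c eq by simp
qed

lemma locB:
  assumes m1: "1 \<le> m" and pm: "\<forall>i<2*m. p i \<le> p (Suc i)" and sp: "p (2*m) - p 0 \<le> pi"
    and eq: "p m = p (m - 1)"
  shows "(\<Sum>r<Suc m. psi (p (r+m) - p r)) \<le> (\<Sum>r<m. psi (p (Suc (r+m)) - p r))"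
proof -
  define q where "q i = - p (2*m - i)" for i
  have qm: "\<forall>i<2*m. q i \<le> q (Suc i)"
  proof (intro allI impI)
    fix i assume i: "i < 2*m"
    have "p (2*m - Suc i) \<le> p (Suc (2*m - Suc i))" using pm i by auto
    moreover have "Suc (2*m - Suc i) = 2*m - i" using i by simp
    ultimately show "q i \<le> q (Suc i)" by (simp add: q_def)
  qed
  have qs: "q (2*m) - q 0 \<le> pi" using sp by (simp add: q_def)
  have qe: "q m = q (Suc m)"
  proof -
    have "2*m - Suc m = m - 1" by simp
    then show ?thesis using eq by (simp add: q_def mult_2)
  qed
  have A: "(\<Sum>r<Suc m. psi (q (r+m) - q r)) \<le> (\<Sum>r<m. psi (q (Suc (r+m)) - q r))"
    by (rule locA[OF m1 qm qs qe])
  have L: "(\<Sum>r<Suc m. psi (q (r+m) - q r)) = (\<Sum>r<Suc m. psi (p (r+m) - p r))"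
  proof -
    have "(\<Sum>r<Suc m. psi (p (r+m) - p r)) = (\<Sum>r<Suc m. psi (p ((Suc m - Suc r)+m) - p (Suc m - Suc r)))"
      by (rule sum.nat_diff_reindex[symmetric])
    also have "\<dots> = (\<Sum>r<Suc m. psi (q (r+m) - q r))"
    proof (rule sum.cong)
      fix r assume "r \<in> {..<Suc m}"
      then have r: "r \<le> m" by simp
      have e1: "2*m - (r+m) = Suc m - Suc r" and e2: "2*m - r = (Suc m - Suc r) + m" using r by auto
      show "psi (p ((Suc m - Suc r)+m) - p (Suc m - Suc r)) = psi (q (r+m) - q r)"
        unfolding q_def e1 e2 by simp
    qed simp
    finally show ?thesis by simp
  qed
  have R: "(\<Sum>r<m. psi (q (Suc (r+m)) - q r)) = (\<Sum>r<m. psi (p (Suc (r+m)) - p r))"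
  proof -
    have "(\<Sum>r<m. psi (p (Suc (r+m)) - p r)) = (\<Sum>r<m. psi (p (Suc ((m - Suc r)+m)) - p (m - Suc r)))"
      by (rule sum.nat_diff_reindex[symmetric])
    also have "\<dots> = (\<Sum>r<m. psi (q (Suc (r+m)) - q r))"
    proof (rule sum.cong)
      fix r assume "r \<in> {..<m}"
      then have r: "r < m" by simp
      have e1: "2*m - r = Suc ((m - Suc r)+m)" and e2: "2*m - Suc (r+m) = m - Suc r" using r by auto
      show "psi (p (Suc ((m - Suc r)+m)) - p (m - Suc r)) = psi (q (Suc (r+m)) - q r)"
        unfolding q_def e1 e2 by simp
    qed simp
    finally show ?thesis by simp
  qed
  show ?thesis using A L R by simp
qed

lemma loc:
  assumes m1: "1 \<le> m" and pm: "\<forall>i<2*m. p i \<le> p (Suc i)" and sp: "p (2*m) - p 0 \<le> pi"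
  shows "(\<Sum>r<Suc m. psi (p (r+m) - p r)) \<le> (\<Sum>r<m. psi (p (Suc (r+m)) - p r))"
proof -
  obtain k where mk: "m = Suc k" using m1 by (cases m) auto
  define K where "K = (\<Sum>r<k. psi (p (Suc r + m) - p (Suc r)))"
  define g where "g v = psi (v - p 0) + psi (p (2*m) - v)" for v
  have LHS: "(\<Sum>r<Suc m. psi ((p(m := v)) (r+m) - (p(m := v)) r)) = g v + K" for v
  proof -
    have "(\<Sum>r<Suc m. psi ((p(m := v)) (r+m) - (p(m := v)) r)) =
       psi ((p(m := v)) m - (p(m := v)) 0) + ((\<Sum>r<k. psi ((p(m := v)) (Suc r + m) - (p(m := v)) (Suc r))) + psi ((p(m := v)) (Suc k + m) - (p(m := v)) (Suc k)))"
      unfolding mk by (subst sum.lessThan_Suc_shift) (subst sum.lessThan_Suc, simp)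
    also have "(\<Sum>r<k. psi ((p(m := v)) (Suc r + m) - (p(m := v)) (Suc r))) = K"
      unfolding K_def by (rule sum.cong) (auto simp: mk)
    finally show ?thesis by (simp add: g_def mk mult_2)
  qed
  have RHS: "(\<Sum>r<m. psi ((p(m := v)) (Suc (r+m)) - (p(m := v)) r)) = (\<Sum>r<m. psi (p (Suc (r+m)) - p r))" for v
    by (rule sum.cong) auto
  have pm1: "p (m - 1) \<le> p m" and pm2: "p m \<le> p (Suc m)" using pm mk by auto
  have p0: "p 0 \<le> p (m - 1)" using chain_mono[OF pm, of 0 "m-1"] by simp
  have p2: "p (Suc m) \<le> p (2*m)" using chain_mono[OF pm, of "Suc m" "2*m"] mk by simp
  have "g (p m) \<le> max (g (p (m-1))) (g (p (Suc m)))"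
    unfolding g_def using pm1 pm2 p0 p2 sp by (intro conv_pair) auto
  moreover
  have "g (p (Suc m)) + K \<le> (\<Sum>r<m. psi (p (Suc (r+m)) - p r))"
  proof -
    have "(\<Sum>r<Suc m. psi ((p(m := p (Suc m))) (r+m) - (p(m := p (Suc m))) r)) \<le> (\<Sum>r<m. psi ((p(m := p (Suc m))) (Suc (r+m)) - (p(m := p (Suc m))) r))"
    proof (rule locA[OF m1])
      show "\<forall>i<2*m. (p(m := p (Suc m))) i \<le> (p(m := p (Suc m))) (Suc i)"
      proof (intro allI impI)
        fix i assume i: "i < 2*m"
        consider "i = m" | "Suc i = m" | "i \<noteq> m" "Suc i \<noteq> m" by blast
        then show "(p(m := p (Suc m))) i \<le> (p(m := p (Suc m))) (Suc i)"
        proof cases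
          case 1 then show ?thesis by simp
        next
          case 2 then show ?thesis using pm1 pm2 mk by auto
        next
          case 3 then show ?thesis using pm i by auto
        qed
      qed
      show "(p(m := p (Suc m))) (2*m) - (p(m := p (Suc m))) 0 \<le> pi" using sp mk by simp
      show "(p(m := p (Suc m))) m = (p(m := p (Suc m))) (Suc m)" by simp
    qed
    then show ?thesis using LHS RHS by simp
  qed
  moreover
  have "g (p (m-1)) + K \<le> (\<Sum>r<m. psi (p (Suc (r+m)) - p r))"
  proof -
    have "(\<Sum>r<Suc m. psi ((p(m := p (m-1))) (r+m) - (p(m := p (m-1))) r)) \<le> (\<Sum>r<m. psi ((p(m := p (m-1))) (Suc (r+m)) - (p(m := p (m-1))) r))"
    proof (rule locB[OF m1])
      show "\<forall>i<2*m. (p(m := p (m-1))) i \<le> (p(m := p (m-1))) (Suc i)"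
      proof (intro allI impI)
        fix i assume i: "i < 2*m"
        consider "i = m" | "Suc i = m" | "i \<noteq> m" "Suc i \<noteq> m" by blast
        then show "(p(m := p (m-1))) i \<le> (p(m := p (m-1))) (Suc i)"
        proof cases
          case 1 then show ?thesis using pm1 pm2 mk by auto
        next
          case 2 then show ?thesis using mk by auto
        next
          case 3 then show ?thesis using pm i by auto
        qed
      qed
      show "(p(m := p (m-1))) (2*m) - (p(m := p (m-1))) 0 \<le> pi" using sp mk by simp
      show "(p(m := p (m-1))) m = (p(m := p (m-1))) (m - 1)" using mk by simp
    qed
    then show ?thesis using LHS RHS by simp
  qed
  moreover have "(\<Sum>r<Suc m. psi (p (r+m) - p r)) = g (p m) + K"
    using LHS[of "p m"] by simp
  ultimately show ?thesis by (simp add: max_def split: if_splits)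
qed



definition FF :: "nat \<Rightarrow> nat \<Rightarrow> (nat \<Rightarrow> real) \<Rightarrow> real" where
  "FF n m q = (\<Sum>k<n. psi (q (k+m) - q k))"

lemma sum_split_add: "(\<Sum>k<a+b. f k) = (\<Sum>k<a. f k) + (\<Sum>k<b. f (a+k))"
  for f :: "nat \<Rightarrow> real"
  by (induction b) (simp_all add: add.assoc)

lemma disc_base:
  assumes q: "\<forall>k. q (k + 2*m) = q k + pi"
  shows "FF (2*m) m q = real m"
proof -
  have "FF (2*m) m q = (\<Sum>k<m. psi (q (k+m) - q k)) + (\<Sum>k<m. psi (q (m+k+m) - q (m+k)))"
    unfolding FF_def mult_2 by (rule sum_split_add)
  also have "(\<Sum>k<m. psi (q (m+k+m) - q (m+k))) = (\<Sum>k<m. 1 - psi (q (k+m) - q k))"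
  proof (rule sum.cong)
    fix k
    have "q (m+k+m) = q k + pi" using q[rule_format, of k] by (simp add: mult_2 add.commute add.left_commute)
    then have "psi (q (m+k+m) - q (m+k)) = psi (pi - (q (k+m) - q k))" by (simp add: add.commute algebra_simps)
    then show "psi (q (m+k+m) - q (m+k)) = 1 - psi (q (k+m) - q k)"
      using psi_compl[of "q (k+m) - q k"] by simp
  qed simp
  finally show ?thesis by (simp add: sum_subtractf)
qed

lemma disc:
  assumes m1: "1 \<le> m" and n: "2*m \<le> n"
  shows "mono q \<Longrightarrow> (\<forall>k. q (k+n) = q k + pi) \<Longrightarrow> FF n m q \<le> m"
  using n
proof (induction n arbitrary: q rule: nat_induct_at_least)
  case base
  then show ?case using disc_base[of q m] by simp
next
  case (Suc n)
  note mq = Suc.prems(1) and pq = Suc.prems(2)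
  have n0: "0 < n" using Suc.hyps m1 by simp
  define q' where "q' k = q (k + k div n)" for k
  have mq': "mono q'"
    unfolding q'_def mono_def
  proof (intro allI impI)
    fix x y :: nat assume "x \<le> y"
    then have "x + x div n \<le> y + y div n" by (intro add_mono div_le_mono)
    then show "q (x + x div n) \<le> q (y + y div n)" using mq by (simp add: monoD)
  qed
  have pq': "\<forall>k. q' (k+n) = q' k + pi"
  proof
    fix k
    have "(k + n) div n = k div n + 1" using n0 by simp
    then have "k + n + (k + n) div n = (k + k div n) + Suc n" by simp
    then show "q' (k+n) = q' k + pi" unfolding q'_def using pq by metis
  qed
  have IH: "FF n m q' \<le> m" using Suc.IH[OF mq' pq'] .
  define f where "f k = psi (q (k+m) - q k)" for k
  have nm: "n = (n - m) + m" "Suc n = (n - m) + Suc m" using Suc.hyps by auto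
  have A: "FF (Suc n) m q = (\<Sum>k<n-m. f k) + (\<Sum>r<Suc m. f (n - m + r))"
    unfolding FF_def f_def by (subst nm(2)) (rule sum_split_add)
  have B: "FF n m q' = (\<Sum>k<n-m. psi (q' (k+m) - q' k)) + (\<Sum>r<m. psi (q' (n - m + r + m) - q' (n - m + r)))"
    unfolding FF_def by (subst nm(1)) (rule sum_split_add)
  have B1: "(\<Sum>k<n-m. psi (q' (k+m) - q' k)) = (\<Sum>k<n-m. f k)"
  proof (rule sum.cong)
    fix k assume "k \<in> {..<n-m}"
    then have "k + m < n" "k < n" by auto
    then show "psi (q' (k+m) - q' k) = f k" by (simp add: q'_def f_def)
  qed simp
  define p where "p r = q (n - m + r)" for r
  have B2: "(\<Sum>r<m. psi (q' (n - m + r + m) - q' (n - m + r))) = (\<Sum>r<m. psi (p (Suc (r+m)) - p r))"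
  proof (rule sum.cong)
    fix r assume "r \<in> {..<m}"
    then have r: "r < m" by simp
    have d1: "(n - m + r + m) div n = 1"
    proof -
      have "n - m + r + m = n + r" using Suc.hyps by simp
      moreover have "(n + r) div n = 1" using r Suc.hyps n0 by (simp add: div_add_self1)
      ultimately show ?thesis by simp
    qed
    have d2: "(n - m + r) div n = 0" using r Suc.hyps by simp
    have e1: "n - m + r + m + 1 = n - m + Suc (r + m)" using Suc.hyps by simp
    show "psi (q' (n - m + r + m) - q' (n - m + r)) = psi (p (Suc (r+m)) - p r)"
      unfolding q'_def p_def d1 d2 e1 by simp
  qed simp
  have A2: "(\<Sum>r<Suc m. f (n - m + r)) = (\<Sum>r<Suc m. psi (p (r+m) - p r))"
  proof (rule sum.cong)
    fix r
    show "f (n - m + r) = psi (p (r+m) - p r)" unfolding f_def p_def by (simp add: add.assoc)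
  qed simp
  have L: "(\<Sum>r<Suc m. psi (p (r+m) - p r)) \<le> (\<Sum>r<m. psi (p (Suc (r+m)) - p r))"
  proof (rule loc[OF m1])
    show "\<forall>i<2*m. p i \<le> p (Suc i)" using mq by (auto simp: p_def monoD)
    have "q (n - m + 2*m) \<le> q (n - m + Suc n)" using Suc.hyps by (intro monoD[OF mq]) simp
    also have "\<dots> = q (n - m) + pi" using pq by simp
    finally show "p (2*m) - p 0 \<le> pi" by (simp add: p_def)
  qed
  have "FF (Suc n) m q \<le> FF n m q'"
    unfolding A B B1 B2 A2 using L by simp
  then show ?case using IH by simp
qed



definition H :: "(real \<Rightarrow> real) \<Rightarrow> real \<Rightarrow> real \<Rightarrow> real" where
  "H th t x = psi (th (x + t) - th (x - t))"

lemma J_H: "J th t = 1 / (2*pi) * integral {0..2*pi} (H th t)"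
  unfolding J_def H_def sin_sq_psi by simp

lemma H_meas:
  assumes "mono th"
  shows "H th t \<in> borel_measurable borel"
proof -
  have [measurable]: "th \<in> borel_measurable borel" using borel_measurable_mono assms by blast
  show ?thesis unfolding H_def psi_def by measurable
qed

lemma H_int:
  assumes "mono th"
  shows "H th t integrable_on {a..b}"
proof -
  have m: "H th t \<in> borel_measurable (lebesgue_on {a..b})"
    using H_meas[OF assms]
    by (metis measurable_lborel2 measurable_restrict_space1 measurable_completion)
  have "H th t absolutely_integrable_on {a..b}"
    by (rule measurable_bounded_by_integrable_imp_absolutely_integrable[OF m, where g = "\<lambda>_. 1"])
       (auto simp: H_def psi_def)
  then show ?thesis using set_lebesgue_integral_eq_integral(1) absolutely_integrable_on_def by blast
qed


lemma th_minus:
  assumes "\<And>x. th (x + pi) = th x + pi"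
  shows "th (x - pi) = th x - pi"
  using assms[of "x - pi"] by simp

lemma diff_range:
  assumes "mono th" "\<And>x. th (x + pi) = th x + pi" "0 \<le> t" "t \<le> pi/2"
  shows "0 \<le> th (x + t) - th (x - t)" "th (x + t) - th (x - t) \<le> pi"
proof -
  show "0 \<le> th (x + t) - th (x - t)" using assms(1,3) by (simp add: monoD)
  have "th (x + t) \<le> th (x - t + pi)" using assms by (intro monoD[OF assms(1)]) simp
  then show "th (x + t) - th (x - t) \<le> pi" using assms(2)[of "x - t"] by simp
qed

lemma int_shift:
  fixes f :: "real \<Rightarrow> real"
  assumes "\<And>a b. f integrable_on {a..b}"
  shows "(\<lambda>x. f (x + c)) integrable_on {a..b}"
  using integrable_shift_real_ivl[of f "a+c" "b+c" c] assms[of "a+c" "b+c"] by simp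

lemma sampling:
  fixes f :: "real \<Rightarrow> real"
  assumes d: "0 < d" and fi: "\<And>a b. f integrable_on {a..b}"
  shows "integral {0..real N * d} f = integral {0..d} (\<lambda>c. \<Sum>k<N. f (c + real k * d))"
proof (induction N)
  case 0
  then show ?case by simp
next
  case (Suc N)
  have A: "integral {0..real (Suc N) * d} f = integral {0..real N * d} f + integral {real N * d..real (Suc N) * d} f"
    by (rule Henstock_Kurzweil_Integration.integral_combine[symmetric]) (use d fi in \<open>auto simp: algebra_simps\<close>)
  have A2: "integral {real N * d..real (Suc N) * d} f = integral {0..d} (\<lambda>c. f (c + real N * d))"
    using integral_shift_real_ivl[of "real N * d" "real N * d" "real (Suc N) * d" f]
    by (simp add: algebra_simps)
  have B: "integral {0..d} (\<lambda>c. \<Sum>k<Suc N. f (c + real k * d)) =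
      integral {0..d} (\<lambda>c. (\<Sum>k<N. f (c + real k * d)) + f (c + real N * d))"
    by simp
  have B2: "integral {0..d} (\<lambda>c. (\<Sum>k<N. f (c + real k * d)) + f (c + real N * d)) = integral {0..d} (\<lambda>c. \<Sum>k<N. f (c + real k * d)) + integral {0..d} (\<lambda>c. f (c + real N * d))"
    by (intro integral_add integrable_sum int_shift fi) auto
  show ?case using A A2 B B2 Suc.IH by simp
qed

lemma FF_double:
  assumes "\<forall>k. q (k+n) = q k + pi"
  shows "FF (n+n) m q = 2 * FF n m q"
proof -
  have "FF (n+n) m q = FF n m q + (\<Sum>k<n. psi (q (n+k+m) - q (n+k)))"
    unfolding FF_def by (rule sum_split_add)
  also have "(\<Sum>k<n. psi (q (n+k+m) - q (n+k))) = FF n m q"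
    unfolding FF_def
  proof (rule sum.cong)
    fix k
    have "q (n+k+m) = q (k+m) + pi" "q (n+k) = q k + pi"
      using assms[rule_format, of "k+m"] assms[rule_format, of k] by (simp_all add: ac_simps)
    then show "psi (q (n+k+m) - q (n+k)) = psi (q (k+m) - q k)" by simp
  qed simp
  finally show ?thesis by simp
qed

lemma J_grid:
  assumes mth: "mono th" and pth: "\<And>x. th (x + pi) = th x + pi"
    and m1: "1 \<le> m" and mn: "2*m \<le> n"
  shows "J th (pi * real m / (2 * real n)) \<le> real m / real n"
proof -
  define t where "t = pi * real m / (2 * real n)"
  define d where "d = pi / real n"
  have n0: "0 < n" using m1 mn by simp
  have d0: "0 < d" using n0 by (simp add: d_def)
  have nd: "real n * d = pi" using n0 by (simp add: d_def)
  have md: "real m * d = 2 * t" using n0 by (simp add: d_def t_def)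
  have fi: "\<And>a b. H th t integrable_on {a..b}" by (rule H_int[OF mth])
  have e: "real (2*n) * d = 2*pi" using nd by simp
  have "integral {0..2*pi} (H th t) = integral {0..real (2*n) * d} (H th t)"
    by (simp only: e)
  also have "\<dots> = integral {0..d} (\<lambda>c. \<Sum>k<2*n. H th t (c + real k * d))"
    by (rule sampling[OF d0 fi])
  also have "\<dots> \<le> integral {0..d} (\<lambda>c. 2 * real m)"
  proof (rule integral_le)
    show "(\<lambda>c. \<Sum>k<2*n. H th t (c + real k * d)) integrable_on {0..d}"
      by (intro integrable_sum int_shift fi) auto
    show "(\<lambda>c. 2 * real m) integrable_on {0..d}" by auto
    fix c
    define q where "q k = th (c - t + real k * d)" for k
    have mq: "mono q" unfolding q_def mono_def
      using d0 by (auto intro!: monoD[OF mth] mult_right_mono)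
    have pq: "\<forall>k. q (k+n) = q k + pi"
    proof
      fix k
      have e: "c - t + real (k+n) * d = (c - t + real k * d) + pi" using nd by (simp add: algebra_simps)
      show "q (k+n) = q k + pi" unfolding q_def e by (rule pth)
    qed
    have "(\<Sum>k<2*n. H th t (c + real k * d)) = FF (n+n) m q"
      unfolding FF_def mult_2
    proof (rule sum.cong)
      fix k
      have e1: "c + real k * d + t = c - t + real (k+m) * d" using md by (simp add: algebra_simps)
      have e2: "c + real k * d - t = c - t + real k * d" by simp
      show "H th t (c + real k * d) = psi (q (k+m) - q k)"
        unfolding H_def q_def e1 e2 ..
    qed simp
    also have "\<dots> = 2 * FF n m q" by (rule FF_double[OF pq])
    also have "\<dots> \<le> 2 * real m" using disc[OF m1 mn mq pq] by simp
    finally show "(\<Sum>k<2*n. H th t (c + real k * d)) \<le> 2 * real m" .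
  qed
  also have "\<dots> = 2 * real m * d" using d0 by simp
  finally have "integral {0..2*pi} (H th t) \<le> 2 * real m * d" .
  then have "J th t \<le> 1 / (2*pi) * (2 * real m * d)"
    unfolding J_H by (intro mult_left_mono) auto
  also have "\<dots> = real m / real n" by (simp add: d_def)
  finally show ?thesis by (simp add: t_def)
qed



lemma J_mono:
  assumes mth: "mono th" and pth: "\<And>x. th (x + pi) = th x + pi"
    and "0 \<le> t" "t \<le> t'" "t' \<le> pi/2"
  shows "J th t \<le> J th t'"
proof -
  have "integral {0..2*pi} (H th t) \<le> integral {0..2*pi} (H th t')"
  proof (rule integral_le)
    show "H th t integrable_on {0..2*pi}" "H th t' integrable_on {0..2*pi}" by (rule H_int[OF mth])+
    fix x
    have "0 \<le> th (x + t) - th (x - t)" using diff_range[OF mth pth, of t x] assms by auto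
    moreover have "th (x + t) - th (x - t) \<le> th (x + t') - th (x - t')"
      using assms by (intro diff_mono monoD[OF mth]) auto
    moreover have "th (x + t') - th (x - t') \<le> pi" using diff_range[OF mth pth, of t' x] assms by auto
    ultimately show "H th t x \<le> H th t' x" unfolding H_def by (rule psi_mono)
  qed
  then show ?thesis unfolding J_H by (intro mult_left_mono) auto
qed

lemma J_zero: "J th 0 = 0"
  unfolding J_H H_def by simp

lemma J_bound_aux:
  assumes mth: "mono th" and pth: "\<And>x. th (x + pi) = th x + pi"
    and t0: "0 < t" and t1: "t \<le> pi/4" and N: "1 \<le> N"
  shows "J th t \<le> 2 * t / pi + 1 / real N"
proof -
  define n where "n = 2 * N"
  define z where "z = 2 * t * real n / pi"
  define m where "m = nat \<lceil>z\<rceil>"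
  have z0: "0 < z" using t0 N by (simp add: z_def n_def)
  have zN: "z \<le> real N" using t1 N by (simp add: z_def n_def field_simps)
  have mz: "real m = of_int \<lceil>z\<rceil>" using z0 by (simp add: m_def)
  have c1: "1 \<le> \<lceil>z\<rceil>" using z0 by simp
  have m1: "1 \<le> m" using c1 unfolding m_def by (simp add: le_nat_iff)
  have mN: "m \<le> N" using zN by (simp add: m_def ceiling_le_iff nat_le_iff)
  have mn: "2 * m \<le> n" using mN by (simp add: n_def)
  have zm: "z \<le> real m" using mz by simp
  have mz1: "real m \<le> z + 1" using mz by simp
  have n0: "0 < real n" using N by (simp add: n_def)
  have tt: "t \<le> pi * real m / (2 * real n)"
    using zm n0 by (simp add: z_def field_simps)
  have tt2: "pi * real m / (2 * real n) \<le> pi / 2"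
    using mn n0 by (simp add: field_simps)
  have "J th t \<le> J th (pi * real m / (2 * real n))"
    using t0 tt tt2 by (intro J_mono[OF mth pth]) auto
  also have "\<dots> \<le> real m / real n" by (rule J_grid[OF mth pth m1 mn])
  also have "\<dots> \<le> (z + 1) / real n" using mz1 n0 by (simp add: divide_right_mono)
  also have "\<dots> = 2 * t / pi + 1 / real n" using n0 by (simp add: z_def field_simps)
  also have "\<dots> \<le> 2 * t / pi + 1 / real N" using N by (simp add: n_def field_simps)
  finally show ?thesis .
qed

lemma J_bound:
  assumes mth: "mono th" and pth: "\<And>x. th (x + pi) = th x + pi"
    and t0: "0 \<le> t" and t1: "t \<le> pi/4"
  shows "J th t \<le> 2 * t / pi"
proof (cases "t = 0")
  case True then show ?thesis by (simp add: J_zero)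
next
  case False
  then have tp: "0 < t" using t0 by simp
  show ?thesis
  proof (rule ccontr)
    assume "\<not> ?thesis"
    then have e: "0 < J th t - 2 * t / pi" by simp
    obtain N :: nat where N: "1 / (J th t - 2 * t / pi) < real N" using reals_Archimedean2 by blast
    have N1: "1 \<le> N" using N e by (cases N) (auto simp: field_simps)
    have "1 / real N < J th t - 2 * t / pi" using N e N1 by (simp add: field_simps)
    moreover have "J th t \<le> 2 * t / pi + 1 / real N" by (rule J_bound_aux[OF mth pth tp t1 N1])
    ultimately show False by simp
  qed
qed


lemma H_per:
  assumes pth: "\<And>x. th (x + pi) = th x + pi"
  shows "H th t (x + pi) = H th t x"
proof -
  have e1: "x + pi + t = (x + t) + pi" and e2: "x + pi - t = (x - t) + pi" by simp_all
  show ?thesis unfolding H_def e1 e2 pth by simp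
qed

lemma H_compl:
  assumes pth: "\<And>x. th (x + pi) = th x + pi"
  shows "H th (pi/2 - t) (x + pi/2) = 1 - H th t x"
proof -
  have e1: "x + pi/2 + (pi/2 - t) = (x - t) + pi" and e2: "x + pi/2 - (pi/2 - t) = x + t" by simp_all
  have e3: "th (x - t) + pi - th (x + t) = pi - (th (x + t) - th (x - t))" by simp
  show ?thesis unfolding H_def e1 e2 pth e3 using psi_compl[of "th (x + t) - th (x - t)"] by simp
qed

lemma sum_shift_cyc: "(\<Sum>k<n. h (Suc k)) = (\<Sum>k<n. h k) + h n - h 0" for h :: "nat \<Rightarrow> real"
proof -
  have "(\<Sum>k<Suc n. h k) = h 0 + (\<Sum>k<n. h (Suc k))" by (rule sum.lessThan_Suc_shift)
  moreover have "(\<Sum>k<Suc n. h k) = (\<Sum>k<n. h k) + h n" by simp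
  ultimately show ?thesis by simp
qed

lemma shift_quarter:
  fixes g :: "real \<Rightarrow> real"
  assumes gi: "\<And>a b. g integrable_on {a..b}" and gp: "\<And>x. g (x + 2*pi) = g x"
  shows "integral {0..2*pi} (\<lambda>x. g (x + pi/2)) = integral {0..2*pi} g"
proof -
  have d0: "0 < pi/2" by simp
  have e: "real 4 * (pi/2) = 2*pi" by simp
  have gi': "\<And>a b. (\<lambda>x. g (x + pi/2)) integrable_on {a..b}" by (rule int_shift[OF gi])
  have "integral {0..2*pi} g = integral {0..pi/2} (\<lambda>c. \<Sum>k<4. g (c + real k * (pi/2)))"
    using sampling[OF d0 gi, of 4] by (simp only: e)
  moreover have "integral {0..2*pi} (\<lambda>x. g (x + pi/2)) = integral {0..pi/2} (\<lambda>c. \<Sum>k<4. g (c + real k * (pi/2) + pi/2))"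
    using sampling[OF d0 gi', of 4] by (simp only: e)
  moreover have "(\<Sum>k<4. g (c + real k * (pi/2) + pi/2)) = (\<Sum>k<4. g (c + real k * (pi/2)))" for c
  proof -
    define h where "h k = g (c + real k * (pi/2))" for k
    have ek: "c + real k * (pi/2) + pi/2 = c + real (Suc k) * (pi/2)" for k by (simp add: algebra_simps)
    have "(\<Sum>k<4. g (c + real k * (pi/2) + pi/2)) = (\<Sum>k<4. h (Suc k))"
      unfolding h_def ek ..
    also have "\<dots> = (\<Sum>k<4. h k) + h 4 - h 0" by (rule sum_shift_cyc)
    also have "h 4 = h 0" unfolding h_def using gp[of c] by simp
    finally show ?thesis unfolding h_def by simp
  qed
  ultimately show ?thesis by simp
qed

lemma J_antisym:
  assumes mth: "mono th" and pth: "\<And>x. th (x + pi) = th x + pi"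
  shows "J th t + J th (pi/2 - t) = 1"
proof -
  have gp: "H th (pi/2 - t) (x + 2*pi) = H th (pi/2 - t) x" for x
    using H_per[of th "pi/2 - t" "x + pi", OF pth] H_per[of th "pi/2 - t" x, OF pth] by (simp add: algebra_simps)
  have "integral {0..2*pi} (H th (pi/2 - t)) = integral {0..2*pi} (\<lambda>x. H th (pi/2 - t) (x + pi/2))"
    by (rule shift_quarter[symmetric]) (use H_int[OF mth] gp in auto)
  also have "\<dots> = integral {0..2*pi} (\<lambda>x. 1 - H th t x)" using H_compl[of th, OF pth] by simp
  also have "\<dots> = integral {0..2*pi} (\<lambda>x. 1) - integral {0..2*pi} (H th t)"
    by (rule integral_diff) (auto intro: H_int[OF mth])
  also have "\<dots> = 2*pi - integral {0..2*pi} (H th t)" by simp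
  finally have "integral {0..2*pi} (H th (pi/2 - t)) = 2*pi - integral {0..2*pi} (H th t)" .
  then show ?thesis unfolding J_H by (simp add: field_simps)
qed



theorem lemmaA1:
  fixes \<theta> M :: "real \<Rightarrow> real"
  assumes "mono \<theta>"
    and "\<And>x. \<theta> (x + pi) = \<theta> x + pi"
    and "\<And>t. t \<in> {0..pi/2} \<Longrightarrow> M t \<ge> 0"
    and "\<And>s t. s \<in> {0..pi/2} \<Longrightarrow> t \<in> {0..pi/2} \<Longrightarrow> s \<le> t \<Longrightarrow> M t \<le> M s"
  shows "integral {0..pi/2} (\<lambda>\<tau>. M \<tau> * J \<theta> \<tau>)
           \<le> (2 / pi) * integral {0..pi/2} (\<lambda>\<tau>. M \<tau> * \<tau>)"
proof -
  note mth = assms(1) and pth = assms(2) and M0 = assms(3) and Mmon = assms(4)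
  have Mi: "M integrable_on {0..pi/2}"
  proof -
    have "mono_on {0..pi/2} (\<lambda>t. - M t)" unfolding mono_on_def using Mmon by auto
    then have "(\<lambda>t. - M t) integrable_on {0..pi/2}" by (rule integrable_on_mono_on)
    then show ?thesis using integrable_neg_iff by blast
  qed
  have Mti: "(\<lambda>\<tau>. M \<tau> * \<tau>) integrable_on {0..pi/2}"
  proof -
    have Ma: "M absolutely_integrable_on {0..pi/2}"
      by (rule nonnegative_absolutely_integrable_1[OF Mi]) (use M0 in auto)
    have idm: "(\<lambda>x::real. x) \<in> borel_measurable (lebesgue_on {0..pi/2})"
    proof -
      have "(\<lambda>x::real. x) \<in> borel_measurable borel" by simp
      then show ?thesis by (metis measurable_lborel2 measurable_restrict_space1 measurable_completion)
    qed
    have "(\<lambda>x. x * M x) absolutely_integrable_on {0..pi/2}"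
      by (rule absolutely_integrable_bounded_measurable_product_real[OF idm _ _ Ma])
         (auto simp: bounded_closed_interval)
    then have "(\<lambda>x. x * M x) integrable_on {0..pi/2}"
      using set_lebesgue_integral_eq_integral(1) absolutely_integrable_on_def by blast
    then show ?thesis by (simp add: mult.commute)
  qed
  have R0: "0 \<le> integral {0..pi/2} (\<lambda>\<tau>. M \<tau> * \<tau>)"
    by (rule integral_nonneg[OF Mti]) (use M0 in auto)
  show ?thesis
  proof (cases "(\<lambda>\<tau>. M \<tau> * J \<theta> \<tau>) integrable_on {0..pi/2}")
    case False
    then show ?thesis using R0 by (simp add: not_integrable_integral)
  next
    case True
    define h2 where "h2 t = J \<theta> t - 2 * t / pi" for t
    define G where "G t = M t * J \<theta> t - 2 / pi * (M t * t)" for t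
    have GM: "G t = M t * h2 t" for t unfolding G_def h2_def by (simp add: algebra_simps)
    have h2a: "h2 (pi/2 - t) = - h2 t" for t
    proof -
      have j: "J \<theta> (pi/2 - t) = 1 - J \<theta> t" using J_antisym[OF mth pth, of t] by linarith
      have e: "2 * (pi/2 - t) / pi = 1 - 2 * t / pi" by (simp add: field_simps)
      show ?thesis unfolding h2_def j e by simp
    qed
    have h2b: "h2 t \<le> 0" if "0 \<le> t" "t \<le> pi/4" for t
      using J_bound[OF mth pth that] unfolding h2_def by simp
    have Gi: "G integrable_on {0..pi/2}"
      unfolding G_def using True Mti by (intro integrable_diff) auto
    define I where "I = integral {0..pi/2} G"
    have GI: "(G has_integral I) {0..pi/2}" using Gi unfolding I_def by (rule integrable_integral)
    have GR: "((\<lambda>t. G (pi/2 - t)) has_integral I) {0..pi/2}"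
    proof -
      have "((\<lambda>x. G (-x)) has_integral I) {-(pi/2)..-0}"
        using has_integral_reflect_real[where f=G and i=I and a=0 and b="pi/2"] GI by blast
      from has_integral_shift_real_ivl[OF this, of "-(pi/2)"]
      show ?thesis by simp
    qed
    have "((\<lambda>t. G t + G (pi/2 - t)) has_integral (I + I)) {0..pi/2}"
      by (rule has_integral_add[OF GI GR])
    moreover have "((\<lambda>t. 0) has_integral 0) {0..pi/2::real}" by simp
    moreover have "G t + G (pi/2 - t) \<le> 0" if t: "t \<in> {0..pi/2}" for t
    proof -
      have "G t + G (pi/2 - t) = (M t - M (pi/2 - t)) * h2 t"
        unfolding GM h2a by (simp add: algebra_simps)
      also have "\<dots> \<le> 0"
      proof (cases "t \<le> pi/4")
        case True
        have "M (pi/2 - t) \<le> M t" using t True by (intro Mmon) auto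
        moreover have "h2 t \<le> 0" using t True by (intro h2b) auto
        ultimately show ?thesis by (simp add: mult_nonneg_nonpos)
      next
        case False
        have "M t \<le> M (pi/2 - t)" using t False by (intro Mmon) auto
        moreover have "h2 (pi/2 - t) \<le> 0" using t False by (intro h2b) auto
        then have "0 \<le> h2 t" using h2a[of t] by simp
        ultimately show ?thesis by (simp add: mult_nonpos_nonneg)
      qed
      finally show ?thesis .
    qed
    ultimately have "I + I \<le> 0" by (rule has_integral_le)
    then have "I \<le> 0" by simp
    moreover have "I = integral {0..pi/2} (\<lambda>\<tau>. M \<tau> * J \<theta> \<tau>) - 2 / pi * integral {0..pi/2} (\<lambda>\<tau>. M \<tau> * \<tau>)"
      unfolding I_def G_def
      by (subst integral_diff) (use True Mti in auto)
    ultimately show ?thesis by simp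
  qed
qed


end
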